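(* For every pair $(R,S)\in\{(R_1,R_4),(R_1,R_5),(R_2,R_4),(R_2,R_5),(R_3,R_5),(R_5,R_2),(R_5,R_3)\}$ we have $\mathsf{AP}(R,S)=\mathsf{C}$.
   Context: Tuples in $\{0,1\}^4$ are written as strings $abcd$. The relations $R_1,\dots,R_5\subseteq\{0,1\}^4$ are $R_1=\{0000,1000,0100,1100,1010,0110,1001,0101,0011,1011,0111,1111\}$, $R_2=\{0000,1000,0100,1100,1010,0101,0011,1111\}$, $R_3=\{0000,1100,1010,0101,0011,1011,0111,1111\}$, $R_4=\{0000,1100,1010,0101,0011,1111\}$, $R_5=\{0000,1100,1010,0110,1001,0101,0011,1111\}$. For $R,S\subseteq\{0,1\}^4$, a Boolean function $f\colon\{0,1\}^n\to\{0,1\}$ is analogy-preserving relative to $(R,S)$ if for all $\mathbf{a},\mathbf{b},\mathbf{c},\mathbf{d}\in\{0,1\}^n$ with $(a_i,b_i,c_i,d_i)\in R$ for every $i$ and such that $(f(\mathbf{a}),f(\mathbf{b}),f(\mathbf{c}),x)\in S$ for some $x\in\{0,1\}$, we have $(f(\mathbf{a}),f(\mathbf{b}),f(\mathbf{c}),f(\mathbf{d}))\in S$; $\mathsf{AP}(R,S)$ is the set of all such functions of all arities. $\mathsf{C}$ is the set of all constant Boolean functions (of all arities). *)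

theory Defs
  imports Main
begin

type_synonym tup4 = "bool \<times> bool \<times> bool \<times> bool"

text \<open>Bit 0 is False, 1 is True; tuple abcd is (a,b,c,d).\<close>
definition R1 :: "tup4 set" where
  "R1 = {(False,False,False,False),(True,False,False,False),(False,True,False,False),
         (True,True,False,False),(True,False,True,False),(False,True,True,False),
         (True,False,False,True),(False,True,False,True),(False,False,True,True),
         (True,False,True,True),(False,True,True,True),(True,True,True,True)}"

definition R2 :: "tup4 set" where
  "R2 = {(False,False,False,False),(True,False,False,False),(False,True,False,False),
         (True,True,False,False),(True,False,True,False),(False,True,False,True),
         (False,False,True,True),(True,True,True,True)}"

definition R3 :: "tup4 set" where
  "R3 = {(False,False,False,False),(True,True,False,False),(True,False,True,False),
         (False,True,False,True),(False,False,True,True),(True,False,True,True),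
         (False,True,True,True),(True,True,True,True)}"

definition R4 :: "tup4 set" where
  "R4 = {(False,False,False,False),(True,True,False,False),(True,False,True,False),
         (False,True,False,True),(False,False,True,True),(True,True,True,True)}"

definition R5 :: "tup4 set" where
  "R5 = {(False,False,False,False),(True,True,False,False),(True,False,True,False),
         (False,True,True,False),(True,False,False,True),(False,True,False,True),
         (False,False,True,True),(True,True,True,True)}"

text \<open>An n-ary Boolean function is represented by f :: bool list => bool, of which
  only the values on lists of length n matter.\<close>
definition AP :: "tup4 set \<Rightarrow> tup4 set \<Rightarrow> nat \<Rightarrow> (bool list \<Rightarrow> bool) \<Rightarrow> bool" where
  "AP R S n f \<longleftrightarrow>
     (\<forall>a b c d. length a = n \<and> length b = n \<and> length c = n \<and> length d = n \<and>
        (\<forall>i<n. (a ! i, b ! i, c ! i, d ! i) \<in> R) \<and>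
        (\<exists>x. (f a, f b, f c, x) \<in> S)
        \<longrightarrow> (f a, f b, f c, f d) \<in> S)"

definition is_const :: "nat \<Rightarrow> (bool list \<Rightarrow> bool) \<Rightarrow> bool" where
  "is_const n f \<longleftrightarrow> (\<exists>v. \<forall>x. length x = n \<longrightarrow> f x = v)"

end

theory Submission
  imports Defs
begin

lemma APD:
  assumes "AP R S n f" "length x = n" "\<And>p. (ga p, gb p, gc p, gd p) \<in> R"
    "\<exists>e. (f (map ga x), f (map gb x), f (map gc x), e) \<in> S"
  shows "(f (map ga x), f (map gb x), f (map gc x), f (map gd x)) \<in> S"
proof -
  have h: "length (map ga x) = n \<and> length (map gb x) = n \<and> length (map gc x) = n \<and> length (map gd x) = n \<and>
        (\<forall>i<n. (map ga x ! i, map gb x ! i, map gc x ! i, map gd x ! i) \<in> R) \<and>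
        (\<exists>e. (f (map ga x), f (map gb x), f (map gc x), e) \<in> S)"
    using assms(2-4) by simp
  show ?thesis by (rule assms(1)[unfolded AP_def, rule_format, OF h])
qed

lemma mapc: "map (\<lambda>_. c) x = replicate (length x) c"
  by (simp add: map_replicate_const)

lemma diag: "S \<in> {R2,R3,R4,R5} \<Longrightarrow> (v,v,v,e) \<in> S \<Longrightarrow> (v,v,v,v) \<in> S"
  unfolding R2_def R3_def R4_def R5_def by (cases v; cases e) auto

lemma const_AP:
  assumes "S \<in> {R2,R3,R4,R5}" "is_const n f" shows "AP R S n f"
proof -
  obtain v where v: "\<And>x. length x = n \<Longrightarrow> f x = v" using assms(2) unfolding is_const_def by blast
  show ?thesis unfolding AP_def
  proof (intro allI impI)
    fix a b c d assume H: "length a = n \<and> length b = n \<and> length c = n \<and> length d = n \<and>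
        (\<forall>i<n. (a ! i, b ! i, c ! i, d ! i) \<in> R) \<and> (\<exists>x. (f a, f b, f c, x) \<in> S)"
    have fv: "f a = v" "f b = v" "f c = v" "f d = v" using H v by auto
    obtain e where "(v,v,v,e) \<in> S" using H fv by auto
    then have "(v,v,v,v) \<in> S" using diag[OF assms(1)] by blast
    then show "(f a, f b, f c, f d) \<in> S" using fv by simp
  qed
qed

lemma from_eq:
  assumes "\<And>x. length x = n \<Longrightarrow> f x = f (replicate n False)" shows "is_const n f"
  using assms unfolding is_const_def by blast

lemma g1: assumes "AP R S n f" "length x = n" "S = R4 \<or> S = R5"
  "\<And>p. (False, p, False, False) \<in> R"
  shows "f x = f (replicate n False)"
proof -
  have k: "(\<exists>e. (f (replicate n False), f x, f (replicate n False), e) \<in> S) \<Longrightarrow>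
     (f (replicate n False), f x, f (replicate n False), f (replicate n False)) \<in> S"
    using APD[OF assms(1,2), of "\<lambda>_. False" "\<lambda>p. p" "\<lambda>_. False" "\<lambda>_. False"] assms(2,4)
    by (simp add: mapc)
  show ?thesis using assms(3)
  proof
    assume "S = R4" then show ?thesis using k
      by (cases "f (replicate n False)"; cases "f x") (auto simp add: R4_def)
  next
    assume "S = R5" then show ?thesis using k
      by (cases "f (replicate n False)"; cases "f x") (auto simp add: R5_def)
  qed
qed

lemma g2: assumes "AP R S n f" "length x = n" "S = R2 \<or> S = R3"
  "\<And>p. (False, p, p, False) \<in> R" "\<And>p. (p, False, False, p) \<in> R"
  shows "f x = f (replicate n False)"
proof -
  have k1: "(\<exists>e. (f (replicate n False), f x, f x, e) \<in> S) \<Longrightarrow>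
     (f (replicate n False), f x, f x, f (replicate n False)) \<in> S"
    using APD[OF assms(1,2), of "\<lambda>_. False" "\<lambda>p. p" "\<lambda>p. p" "\<lambda>_. False"] assms(2,4)
    by (simp add: mapc)
  have k2: "(\<exists>e. (f x, f (replicate n False), f (replicate n False), e) \<in> S) \<Longrightarrow>
     (f x, f (replicate n False), f (replicate n False), f x) \<in> S"
    using APD[OF assms(1,2), of "\<lambda>p. p" "\<lambda>_. False" "\<lambda>_. False" "\<lambda>p. p"] assms(2,5)
    by (simp add: mapc)
  show ?thesis using assms(3)
  proof
    assume "S = R2" then show ?thesis using k1 k2
      by (cases "f (replicate n False)"; cases "f x") (auto simp add: R2_def)
  next
    assume "S = R3" then show ?thesis using k1 k2
      by (cases "f (replicate n False)"; cases "f x") (auto simp add: R3_def)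
  qed
qed

lemma g15: assumes "AP R1 R5 n f" "length x = n"
  shows "f x = f (replicate n False)"
proof -
  have r: "\<And>p. (False, True, True, p) \<in> R1" unfolding R1_def by (case_tac p) simp_all
  have k: "(\<exists>e. (f (replicate n False), f (replicate n True), f (replicate n True), e) \<in> R5) \<Longrightarrow>
     (f (replicate n False), f (replicate n True), f (replicate n True), f x) \<in> R5"
    using APD[OF assms(1,2), of "\<lambda>_. False" "\<lambda>_. True" "\<lambda>_. True" "\<lambda>p. p"] assms(2) r
    by (simp add: mapc)
  show ?thesis using k
    by (cases "f (replicate n False)"; cases "f (replicate n True)"; cases "f x") (auto simp add: R5_def)
qed

lemma g35: assumes "AP R3 R5 n f" "length x = n"
  shows "f x = f (replicate n False)"
proof -
  have r: "\<And>p. (False, True, p, True) \<in> R3" unfolding R3_def by (case_tac p) simp_all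
  have k: "(\<exists>e. (f (replicate n False), f (replicate n True), f x, e) \<in> R5) \<Longrightarrow>
     (f (replicate n False), f (replicate n True), f x, f (replicate n True)) \<in> R5"
    using APD[OF assms(1,2), of "\<lambda>_. False" "\<lambda>_. True" "\<lambda>p. p" "\<lambda>_. True"] assms(2) r
    by (simp add: mapc)
  show ?thesis using k
    by (cases "f (replicate n False)"; cases "f (replicate n True)"; cases "f x") (auto simp add: R5_def)
qed

lemma a1: "(False, p, False, False) \<in> R1" unfolding R1_def by (cases p) simp_all
lemma a2: "(False, p, False, False) \<in> R2" unfolding R2_def by (cases p) simp_all
lemma b1: "(False, p, p, False) \<in> R5" unfolding R5_def by (cases p) simp_all
lemma b2: "(p, False, False, p) \<in> R5" unfolding R5_def by (cases p) simp_all

lemma p14: "AP R1 R4 n f \<longleftrightarrow> is_const n f"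
  using const_AP[of R4] from_eq[of n f] g1[of R1 R4 n f, OF _ _ _ a1] by blast
lemma p15: "AP R1 R5 n f \<longleftrightarrow> is_const n f"
  using const_AP[of R5] from_eq[of n f] g15[of n f] by blast
lemma p24: "AP R2 R4 n f \<longleftrightarrow> is_const n f"
  using const_AP[of R4] from_eq[of n f] g1[of R2 R4 n f, OF _ _ _ a2] by blast
lemma p25: "AP R2 R5 n f \<longleftrightarrow> is_const n f"
  using const_AP[of R5] from_eq[of n f] g1[of R2 R5 n f, OF _ _ _ a2] by blast
lemma p35: "AP R3 R5 n f \<longleftrightarrow> is_const n f"
  using const_AP[of R5] from_eq[of n f] g35[of n f] by blast
lemma p52: "AP R5 R2 n f \<longleftrightarrow> is_const n f"
  using const_AP[of R2] from_eq[of n f] g2[of R5 R2 n f, OF _ _ _ b1 b2] by blast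
lemma p53: "AP R5 R3 n f \<longleftrightarrow> is_const n f"
  using const_AP[of R3] from_eq[of n f] g2[of R5 R3 n f, OF _ _ _ b1 b2] by blast

theorem mainTheorem16:
  shows "\<forall>(R, S) \<in> {(R1,R4),(R1,R5),(R2,R4),(R2,R5),(R3,R5),(R5,R2),(R5,R3)}.
           \<forall>n f. AP R S n f \<longleftrightarrow> is_const n f"
  using p14 p15 p24 p25 p35 p52 p53 by simp

end
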